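(* Let $\mu,\nu\in\Sigma$ be restricted roots such that $\mu+\nu\in\Sigma$. Then the bilinear pairing $\mathfrak g_\mu\times\mathfrak g_\nu\to\mathfrak g_{\mu+\nu}$, $(X,Y)\mapsto[X,Y]$, is nondegenerate: for every nonzero $X\in\mathfrak g_\mu$ there is $Y\in\mathfrak g_\nu$ with $[X,Y]\ne0$, and for every nonzero $Y\in\mathfrak g_\nu$ there is $X\in\mathfrak g_\mu$ with $[X,Y]\neq0$.
   Context: $\mathfrak g$ is the Lie algebra of the isometry group of a Riemannian symmetric space of noncompact type, $\mathfrak g=\mathfrak k\oplus\mathfrak p$ a Cartan decomposition, $\mathfrak a\subseteq\mathfrak p$ maximal abelian, $\Sigma\subset\mathfrak a^*$ the restricted root system and $\mathfrak g_\mu=\{X\in\mathfrak g:[H,X]=\mu(H)X\ \forall H\in\mathfrak a\}$ the restricted root spaces. *)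

theory Defs
  imports "HOL-Analysis.Analysis"
begin

text \<open>A finite-dimensional real Lie algebra is modelled as a Euclidean-space type 'g
(the inner product is only used to compute traces via an orthonormal basis;
trace is basis independent) together with a bracket operation br.\<close>

definition lie_algebra :: "('g::euclidean_space \<Rightarrow> 'g \<Rightarrow> 'g) \<Rightarrow> bool" where
  "lie_algebra br \<longleftrightarrow> bilinear br \<and> (\<forall>x. br x x = 0) \<and>
     (\<forall>x y z. br x (br y z) + br y (br z x) + br z (br x y) = 0)"

definition killing :: "('g::euclidean_space \<Rightarrow> 'g \<Rightarrow> 'g) \<Rightarrow> 'g \<Rightarrow> 'g \<Rightarrow> real" where
  "killing br X Y = (\<Sum>b\<in>Basis. br X (br Y b) \<bullet> b)"

definition semisimple :: "('g::euclidean_space \<Rightarrow> 'g \<Rightarrow> 'g) \<Rightarrow> bool" where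
  "semisimple br \<longleftrightarrow> lie_algebra br \<and> (\<forall>X. (\<forall>Y. killing br X Y = 0) \<longrightarrow> X = 0)"

definition lie_ideal :: "('g::euclidean_space \<Rightarrow> 'g \<Rightarrow> 'g) \<Rightarrow> 'g set \<Rightarrow> bool" where
  "lie_ideal br I \<longleftrightarrow> subspace I \<and> (\<forall>X Y. Y \<in> I \<longrightarrow> br X Y \<in> I)"

definition cartan_decomposition ::
  "('g::euclidean_space \<Rightarrow> 'g \<Rightarrow> 'g) \<Rightarrow> 'g set \<Rightarrow> 'g set \<Rightarrow> bool" where
  "cartan_decomposition br K P \<longleftrightarrow>
     subspace K \<and> subspace P \<and> K \<inter> P = {0} \<and> (\<forall>X. \<exists>k\<in>K. \<exists>p\<in>P. X = k + p) \<and>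
     (\<forall>X\<in>K. \<forall>Y\<in>K. br X Y \<in> K) \<and> (\<forall>X\<in>K. \<forall>Y\<in>P. br X Y \<in> P) \<and>
     (\<forall>X\<in>P. \<forall>Y\<in>P. br X Y \<in> K) \<and>
     (\<forall>X\<in>K. X \<noteq> 0 \<longrightarrow> killing br X X < 0) \<and>
     (\<forall>X\<in>P. X \<noteq> 0 \<longrightarrow> killing br X X > 0)"

text \<open>Lie algebra of the isometry group of a Riemannian symmetric space of noncompact type:
a semisimple Lie algebra with Cartan decomposition g = k + p where k contains no nonzero
ideal of g (effectivity; equivalently, no compact ideals).\<close>
definition noncompact_type ::
  "('g::euclidean_space \<Rightarrow> 'g \<Rightarrow> 'g) \<Rightarrow> 'g set \<Rightarrow> 'g set \<Rightarrow> bool" where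
  "noncompact_type br K P \<longleftrightarrow> semisimple br \<and> cartan_decomposition br K P \<and>
     (\<forall>I. lie_ideal br I \<and> I \<subseteq> K \<longrightarrow> I = {0})"

definition maximal_abelian ::
  "('g::euclidean_space \<Rightarrow> 'g \<Rightarrow> 'g) \<Rightarrow> 'g set \<Rightarrow> 'g set \<Rightarrow> bool" where
  "maximal_abelian br P A \<longleftrightarrow> subspace A \<and> A \<subseteq> P \<and>
     (\<forall>H\<in>A. \<forall>H'\<in>A. br H H' = 0) \<and>
     (\<forall>X\<in>P. (\<forall>H\<in>A. br H X = 0) \<longrightarrow> X \<in> A)"

text \<open>Restricted root space g_mu for a functional mu (only its values on a matter).\<close>
definition root_space ::
  "('g::euclidean_space \<Rightarrow> 'g \<Rightarrow> 'g) \<Rightarrow> 'g set \<Rightarrow> ('g \<Rightarrow> real) \<Rightarrow> 'g set" where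
  "root_space br A \<mu> = {X. \<forall>H\<in>A. br H X = \<mu> H *\<^sub>R X}"

definition restricted_root ::
  "('g::euclidean_space \<Rightarrow> 'g \<Rightarrow> 'g) \<Rightarrow> 'g set \<Rightarrow> ('g \<Rightarrow> real) \<Rightarrow> bool" where
  "restricted_root br A \<mu> \<longleftrightarrow> linear \<mu> \<and> (\<exists>H\<in>A. \<mu> H \<noteq> 0) \<and>
     (\<exists>X\<in>root_space br A \<mu>. X \<noteq> 0)"

end

theory Submission
  imports Defs
begin

definition tr :: "('g::euclidean_space \<Rightarrow> 'g) \<Rightarrow> real" where
  "tr f = (\<Sum>b\<in>Basis. f b \<bullet> b)"

lemma tr_expand:
  fixes h k :: "'g::euclidean_space \<Rightarrow> 'g"
  assumes lh: "linear h"
  shows "tr (\<lambda>b. h (k b)) = (\<Sum>b\<in>Basis. \<Sum>c\<in>Basis. (k b \<bullet> c) * (h c \<bullet> b))"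
proof -
  have "\<And>b. h (k b) = (\<Sum>c\<in>Basis. (k b \<bullet> c) *\<^sub>R h c)"
  proof -
    fix b
    have "h (k b) = h (\<Sum>c\<in>Basis. (k b \<bullet> c) *\<^sub>R c)" by (simp add: euclidean_representation)
    also have "\<dots> = (\<Sum>c\<in>Basis. (k b \<bullet> c) *\<^sub>R h c)"
      using lh by (simp add: linear_sum linear_scale)
    finally show "h (k b) = (\<Sum>c\<in>Basis. (k b \<bullet> c) *\<^sub>R h c)" .
  qed
  then show ?thesis
    by (simp add: tr_def inner_sum_left)
qed

lemma tr_comm:
  fixes f g :: "'g::euclidean_space \<Rightarrow> 'g"
  assumes "linear f" "linear g"
  shows "tr (\<lambda>b. f (g b)) = tr (\<lambda>b. g (f b))"
proof -
  have "tr (\<lambda>b. f (g b)) = (\<Sum>b\<in>Basis. \<Sum>c\<in>Basis. (g b \<bullet> c) * (f c \<bullet> b))" using tr_expand assms by blast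
  also have "\<dots> = (\<Sum>c\<in>Basis. \<Sum>b\<in>Basis. (f c \<bullet> b) * (g b \<bullet> c))"
    by (subst sum.swap) (simp add: mult.commute)
  also have "\<dots> = tr (\<lambda>b. g (f b))" using tr_expand[OF assms(2)] by simp
  finally show ?thesis .
qed

lemma tr_diff: "tr (\<lambda>b. f b - g b) = tr f - tr g"
  by (simp add: tr_def inner_diff_left sum_subtractf)

locale ctx =
  fixes br :: "'g::euclidean_space \<Rightarrow> 'g \<Rightarrow> 'g" and K P :: "'g set"
  assumes lie: "lie_algebra br" and cd: "cartan_decomposition br K P"
begin

lemma bil: "bilinear br" using lie by (simp add: lie_algebra_def)
lemma lin2: "linear (br x)" using bil by (simp add: bilinear_def)
lemma alt: "br x x = 0" using lie by (simp add: lie_algebra_def)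
lemma jac: "br x (br y z) + br y (br z x) + br z (br x y) = 0" using lie by (simp add: lie_algebra_def)

lemmas bl = bilinear_ladd[OF bil] bilinear_radd[OF bil] bilinear_lmul[OF bil] bilinear_rmul[OF bil]
  bilinear_lneg[OF bil] bilinear_rneg[OF bil] bilinear_lzero[OF bil] bilinear_rzero[OF bil]
  bilinear_lsub[OF bil] bilinear_rsub[OF bil]

lemma anti: "br x y = - br y x"
proof -
  have "0 = br (x+y) (x+y)" by (simp only: alt)
  also have "\<dots> = (br x x + br y x) + (br x y + br y y)" by (simp only: bl)
  also have "\<dots> = br x y + br y x" by (simp only: alt add_0_left add_0_right add.commute)
  finally show ?thesis by (simp add: eq_neg_iff_add_eq_0)
qed

lemma sum3: "(a::'g) + b + c = 0 \<Longrightarrow> a = - b - c"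
  by (simp add: algebra_simps add_eq_0_iff2)

lemma jac2: "br (br x y) w = br x (br y w) - br y (br x w)"
proof -
  have a: "br w (br x y) = - br x (br y w) - br y (br w x)" using jac[of w x y] by (rule sum3)
  have b: "br (br x y) w = - br w (br x y)" by (rule anti)
  have c: "br y (br w x) = - br y (br x w)" by (subst anti) (simp add: bl)
  show ?thesis using a b c by simp
qed

lemma leib: "br h (br x y) = br (br h x) y + br x (br h y)"
  using jac2[of h x y] by simp

lemma kdef: "killing br X Y = tr (\<lambda>b. br X (br Y b))"
  by (simp add: killing_def tr_def)

lemma ksym: "killing br X Y = killing br Y X"
  unfolding kdef by (rule tr_comm[OF lin2 lin2])

lemma kinv: "killing br (br X Y) Z = killing br X (br Y Z)"
proof -
  have "killing br (br X Y) Z = tr (\<lambda>b. br X (br Y (br Z b))) - tr (\<lambda>b. br Y (br X (br Z b)))"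
    unfolding kdef jac2 by (rule tr_diff)
  moreover have "killing br X (br Y Z) = tr (\<lambda>b. br X (br Y (br Z b))) - tr (\<lambda>b. br X (br Z (br Y b)))"
    unfolding kdef jac2 bl by (rule tr_diff)
  moreover have "tr (\<lambda>b. br Y (br X (br Z b))) = tr (\<lambda>b. br X (br Z (br Y b)))"
    using tr_comm[of "br Y" "\<lambda>b. br X (br Z b)"] lin2 linear_compose[of "br Z" "br X"]
    by (simp add: o_def)
  ultimately show ?thesis by simp
qed

lemma kl_add: "killing br (X + X') Y = killing br X Y + killing br X' Y"
  by (simp add: killing_def bl inner_add_left sum.distrib)
lemma kl_scale: "killing br (c *\<^sub>R X) Y = c * killing br X Y"
  by (simp add: killing_def bl sum_distrib_left)
lemma kl_neg: "killing br (- X) Y = - killing br X Y"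
  by (simp add: killing_def bl sum_negf)
lemma kl_zero: "killing br 0 Y = 0"
  by (simp add: killing_def bl)
lemma kr_add: "killing br X (Y + Y') = killing br X Y + killing br X Y'"
  using kl_add ksym by metis
lemma kr_scale: "killing br X (c *\<^sub>R Y) = c * killing br X Y"
  using kl_scale ksym by metis
lemma kr_neg: "killing br X (- Y) = - killing br X Y"
  using kl_neg ksym by metis
lemma kr_zero: "killing br X 0 = 0"
  using kl_zero ksym by metis


lemma cdu: "subspace K \<and> subspace P \<and> K \<inter> P = {0} \<and> (\<forall>X. \<exists>k\<in>K. \<exists>p\<in>P. X = k + p) \<and>
     (\<forall>X\<in>K. \<forall>Y\<in>K. br X Y \<in> K) \<and> (\<forall>X\<in>K. \<forall>Y\<in>P. br X Y \<in> P) \<and>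
     (\<forall>X\<in>P. \<forall>Y\<in>P. br X Y \<in> K) \<and>
     (\<forall>X\<in>K. X \<noteq> 0 \<longrightarrow> killing br X X < 0) \<and>
     (\<forall>X\<in>P. X \<noteq> 0 \<longrightarrow> killing br X X > 0)"
  using cd unfolding cartan_decomposition_def .

lemma sK: "subspace K" using cdu by (elim conjE)
lemma sP: "subspace P" using cdu by (elim conjE)
lemma KP: "K \<inter> P = {0}" using cdu by (elim conjE)
lemma dec: "\<exists>k\<in>K. \<exists>p\<in>P. X = k + p" using cdu by (elim conjE) (erule allE)
lemma bKK: "X\<in>K \<Longrightarrow> Y\<in>K \<Longrightarrow> br X Y \<in> K" using cdu by (elim conjE) blast
lemma bKP: "X\<in>K \<Longrightarrow> Y\<in>P \<Longrightarrow> br X Y \<in> P" using cdu by (elim conjE) blast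
lemma bPP: "X\<in>P \<Longrightarrow> Y\<in>P \<Longrightarrow> br X Y \<in> K" using cdu by (elim conjE) blast
lemma negK: "X\<in>K \<Longrightarrow> X \<noteq> 0 \<Longrightarrow> killing br X X < 0" using cdu by (elim conjE) blast
lemma posP: "X\<in>P \<Longrightarrow> X \<noteq> 0 \<Longrightarrow> killing br X X > 0" using cdu by (elim conjE) blast

lemma bPK: "X\<in>P \<Longrightarrow> Y\<in>K \<Longrightarrow> br X Y \<in> P"
  using bKP[of Y X] anti[of X Y] sP by (simp add: subspace_neg)

lemma dec_unique:
  assumes "k\<in>K" "p\<in>P" "k'\<in>K" "p'\<in>P" "k + p = k' + p'"
  shows "k = k' \<and> p = p'"
proof -
  have e: "k - k' = p' - p" using assms(5) by (simp add: algebra_simps)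
  have "k - k' \<in> K" using sK assms(1,3) by (rule subspace_diff)
  moreover have "k - k' \<in> P" unfolding e using sP assms(4,2) by (rule subspace_diff)
  ultimately have "k - k' \<in> K \<inter> P" by blast
  then have z: "k - k' = 0" unfolding KP by blast
  then have "k = k'" by simp
  moreover have "p' - p = 0" using z e by simp
  then have "p = p'" by simp
  ultimately show ?thesis by blast
qed

definition theta :: "'g \<Rightarrow> 'g" where
  "theta X = (let kp = (SOME kp. fst kp \<in> K \<and> snd kp \<in> P \<and> X = fst kp + snd kp) in fst kp - snd kp)"

lemma theta_eq: assumes "k\<in>K" "p\<in>P" shows "theta (k + p) = k - p"
proof -
  define Q where "Q = (\<lambda>kp. fst kp \<in> K \<and> snd kp \<in> P \<and> k + p = fst kp + snd kp)"
  have "Q (k,p)" using assms by (simp add: Q_def)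
  then have q0: "Q (SOME kp. Q kp)" by (rule someI)
  define kp0 where "kp0 = (SOME kp. Q kp)"
  have q: "Q kp0" using q0 unfolding kp0_def .
  have a: "fst kp0 \<in> K" "snd kp0 \<in> P" "k + p = fst kp0 + snd kp0"
    using q unfolding Q_def by auto
  have b: "k = fst kp0 \<and> p = snd kp0" by (rule dec_unique[OF assms a])
  have "theta (k + p) = fst kp0 - snd kp0"
    unfolding theta_def Let_def kp0_def Q_def ..
  then show ?thesis using b by simp
qed

lemma theta_K: "k \<in> K \<Longrightarrow> theta k = k"
  using theta_eq[of k 0] sP by (simp add: subspace_0)
lemma theta_P: "p \<in> P \<Longrightarrow> theta p = - p"
  using theta_eq[of 0 p] sK by (simp add: subspace_0)

lemma theta_theta: "theta (theta X) = X"
proof -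
  obtain k p where "k\<in>K" "p\<in>P" "X = k + p" using dec by blast
  moreover have "-p \<in> P" using sP \<open>p\<in>P\<close> by (simp add: subspace_neg)
  ultimately show ?thesis using theta_eq[of k "-p"] theta_eq[of k p] by simp
qed

lemma theta_0: "theta 0 = 0" using theta_K sK by (simp add: subspace_0)

lemma theta_neg_P: assumes "theta X = - X" shows "X \<in> P"
proof -
  obtain k p where kp: "k\<in>K" "p\<in>P" "X = k + p" using dec by blast
  have e: "k - p = - k - p" using assms theta_eq[OF kp(1,2)] kp(3) by simp
  have "k + k = (k - p) - (- k - p)" by (simp add: algebra_simps)
  also have "\<dots> = 0" unfolding e by simp
  finally have "k + k = 0" .
  then have "(2::real) *\<^sub>R k = 0" by (simp only: scaleR_2)
  then have "k = 0" by simp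
  then show ?thesis using kp by simp
qed

lemma theta_br: "theta (br X Y) = br (theta X) (theta Y)"
proof -
  obtain k p where kp: "k\<in>K" "p\<in>P" "X = k + p" using dec by blast
  obtain k' p' where kp': "k'\<in>K" "p'\<in>P" "Y = k' + p'" using dec by blast
  have e0: "br X Y = (br k k' + br p k') + (br k p' + br p p')"
    using kp kp' by (simp only: bl)
  have e: "br X Y = (br k k' + br p p') + (br k p' + br p k')"
    unfolding e0 by (simp only: add_ac)
  have i1: "br k k' + br p p' \<in> K" using kp kp' bKK bPP sK by (simp add: subspace_add)
  have i2: "br k p' + br p k' \<in> P" using kp kp' bKP bPK sP by (simp add: subspace_add)
  have "theta (br X Y) = (br k k' + br p p') - (br k p' + br p k')"
    unfolding e by (rule theta_eq[OF i1 i2])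
  moreover have "br (theta X) (theta Y) = br (k - p) (k' - p')"
    unfolding kp(3) kp'(3) theta_eq[OF kp(1,2)] theta_eq[OF kp'(1,2)] ..
  moreover have "br (k - p) (k' - p') = (br k k' - br p k') - (br k p' - br p p')"
    by (simp only: bl)
  moreover have "(br k k' - br p k') - (br k p' - br p p') = (br k k' + br p p') - (br k p' + br p k')"
    by (simp add: algebra_simps)
  ultimately show ?thesis by (simp only:)
qed

definition bt :: "'g \<Rightarrow> 'g \<Rightarrow> real" where
  "bt U V = - killing br U (theta V)"

lemma kk_nonneg: "k \<in> K \<Longrightarrow> - killing br k k \<ge> 0"
  using negK[of k] kl_zero[of 0] by (cases "k = 0") auto
lemma pp_nonneg: "p \<in> P \<Longrightarrow> killing br p p \<ge> 0"
  using posP[of p] kl_zero[of 0] by (cases "p = 0") auto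

lemma bt_pos: assumes "U \<noteq> 0" shows "bt U U > 0"
proof -
  obtain k p where kp: "k\<in>K" "p\<in>P" "U = k + p" using dec by blast
  have "bt U U = - killing br (k + p) (theta (k + p))" unfolding bt_def kp(3) ..
  also have "theta (k + p) = k + (- p)" using theta_eq[OF kp(1,2)] by simp
  also have "killing br (k + p) (k + (- p)) = killing br k k - killing br k p + killing br p k - killing br p p"
    by (simp only: kl_add kr_add kr_neg diff_conv_add_uminus add.assoc)
  also have "killing br p k = killing br k p" by (rule ksym)
  finally have e: "bt U U = - killing br k k + killing br p p" by simp
  have a: "- killing br k k \<ge> 0" using kk_nonneg kp by blast
  have b: "killing br p p \<ge> 0" using pp_nonneg kp by blast
  have "k \<noteq> 0 \<or> p \<noteq> 0" using assms kp by auto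
  then show ?thesis
  proof
    assume "k \<noteq> 0" then have "killing br k k < 0" using negK kp by blast
    then show ?thesis using e b by linarith
  next
    assume "p \<noteq> 0" then have "killing br p p > 0" using posP kp by blast
    then show ?thesis using e a by linarith
  qed
qed

lemma bt_nonneg: "bt U U \<ge> 0"
  using bt_pos[of U] by (cases "U = 0") (auto simp: bt_def theta_0 kr_zero)

lemma bt_zero_iff: "bt U U = 0 \<Longrightarrow> U = 0"
  using bt_pos by force

lemma bt_r0: "bt U 0 = 0" by (simp add: bt_def theta_0 kr_zero)
lemma bt_scale: "bt (c *\<^sub>R U) V = c * bt U V" by (simp add: bt_def kl_scale)
lemma bt_neg: "bt (- U) V = - bt U V" by (simp add: bt_def kl_neg)

lemma bt_adj: "bt (br W U) V = - bt U (br (theta W) V)"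
proof -
  have "bt (br W U) V = - killing br (br W U) (theta V)" by (simp add: bt_def)
  also have "\<dots> = killing br (br U W) (theta V)" using anti[of W U] by (simp add: kl_neg)
  also have "\<dots> = killing br U (br W (theta V))" by (rule kinv)
  also have "br W (theta V) = theta (br (theta W) V)" by (simp add: theta_br theta_theta)
  finally show ?thesis by (simp add: bt_def)
qed


lemma theta_add: "theta (X + Y) = theta X + theta Y"
proof -
  obtain k p where kp: "k\<in>K" "p\<in>P" "X = k + p" using dec by blast
  obtain k' p' where kp': "k'\<in>K" "p'\<in>P" "Y = k' + p'" using dec by blast
  have i1: "k + k' \<in> K" using sK kp(1) kp'(1) by (rule subspace_add)
  have i2: "p + p' \<in> P" using sP kp(2) kp'(2) by (rule subspace_add)
  have "X + Y = (k + k') + (p + p')" using kp(3) kp'(3) by (simp add: algebra_simps)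
  then have "theta (X + Y) = (k + k') - (p + p')" using theta_eq[OF i1 i2] by simp
  moreover have "theta X + theta Y = (k - p) + (k' - p')"
    unfolding kp(3) kp'(3) theta_eq[OF kp(1,2)] theta_eq[OF kp'(1,2)] ..
  moreover have "(k + k') - (p + p') = (k - p) + (k' - p')" by (simp add: algebra_simps)
  ultimately show ?thesis by (simp only:)
qed

lemma theta_scale: "theta (c *\<^sub>R X) = c *\<^sub>R theta X"
proof -
  obtain k p where kp: "k\<in>K" "p\<in>P" "X = k + p" using dec by blast
  have i1: "c *\<^sub>R k \<in> K" using sK kp(1) by (rule subspace_scale)
  have i2: "c *\<^sub>R p \<in> P" using sP kp(2) by (rule subspace_scale)
  have "c *\<^sub>R X = c *\<^sub>R k + c *\<^sub>R p" using kp(3) by (simp add: scaleR_add_right)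
  then have "theta (c *\<^sub>R X) = c *\<^sub>R k - c *\<^sub>R p" using theta_eq[OF i1 i2] by simp
  moreover have "theta X = k - p" unfolding kp(3) theta_eq[OF kp(1,2)] ..
  ultimately show ?thesis by (simp add: scaleR_diff_right)
qed

lemma theta_neg: "theta (- X) = - theta X"
  using theta_scale[of "-1" X] by simp

lemma bt_rneg: "bt U (- V) = - bt U V" by (simp add: bt_def theta_neg kr_neg)
lemma bt_l0: "bt 0 V = 0" by (simp add: bt_def kl_zero)

lemma root_br:
  assumes "X \<in> root_space br A \<mu>" "Y \<in> root_space br A \<nu>"
  shows "br X Y \<in> root_space br A (\<lambda>H. \<mu> H + \<nu> H)"
  unfolding root_space_def
proof (intro CollectI ballI)
  fix H assume h: "H \<in> A"
  have "br H (br X Y) = br (br H X) Y + br X (br H Y)" by (rule leib)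
  also have "\<dots> = br (\<mu> H *\<^sub>R X) Y + br X (\<nu> H *\<^sub>R Y)"
    using assms h unfolding root_space_def by simp
  also have "\<dots> = (\<mu> H + \<nu> H) *\<^sub>R br X Y" by (simp add: bl scaleR_add_left)
  finally show "br H (br X Y) = (\<mu> H + \<nu> H) *\<^sub>R br X Y" .
qed

lemma root_theta:
  assumes AP: "A \<subseteq> P" and X: "X \<in> root_space br A \<mu>"
  shows "theta X \<in> root_space br A (\<lambda>H. - \<mu> H)"
  unfolding root_space_def
proof (intro CollectI ballI)
  fix H assume h: "H \<in> A"
  have tH: "theta H = - H" using AP h theta_P by blast
  have "br H (theta X) = theta (br (theta H) X)" by (simp add: theta_br theta_theta)
  also have "\<dots> = theta (- (\<mu> H *\<^sub>R X))" using tH X h unfolding root_space_def by (simp add: bl)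
  also have "\<dots> = (- \<mu> H) *\<^sub>R theta X" by (simp add: theta_neg theta_scale)
  finally show "br H (theta X) = (- \<mu> H) *\<^sub>R theta X" .
qed

lemma main:
  assumes ma: "maximal_abelian br P A"
    and H': "H' \<in> A" "\<mu> H' \<noteq> 0"
    and X: "X \<in> root_space br A \<mu>" "X \<noteq> 0"
    and kill: "\<forall>Y\<in>root_space br A \<nu>. br X Y = 0"
    and Y0: "Y0 \<in> root_space br A \<nu>" "Y0 \<noteq> 0"
    and Z: "Z \<in> root_space br A (\<lambda>H. \<mu> H + \<nu> H)" "Z \<noteq> 0"
  shows False
proof -
  have AP: "A \<subseteq> P" using ma by (simp add: maximal_abelian_def)
  define T where "T = theta X"
  have T: "T \<in> root_space br A (\<lambda>H. - \<mu> H)" unfolding T_def using root_theta[OF AP X(1)] .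
  have tT: "theta T = X" unfolding T_def by (rule theta_theta)
  have s2: "br T Z' = 0" if z: "Z' \<in> root_space br A (\<lambda>H. \<mu> H + \<nu> H)" for Z'
  proof -
    define V where "V = br T Z'"
    have "V \<in> root_space br A (\<lambda>H. - \<mu> H + (\<mu> H + \<nu> H))" unfolding V_def by (rule root_br[OF T z])
    moreover have "(\<lambda>H. - \<mu> H + (\<mu> H + \<nu> H)) = \<nu>" by auto
    ultimately have "V \<in> root_space br A \<nu>" by simp
    then have xv: "br X V = 0" using kill by blast
    have "bt V V = - bt Z' (br (theta T) V)" unfolding V_def[symmetric] by (simp only: V_def bt_adj)
    also have "\<dots> = 0" using xv tT by (simp add: bt_r0)
    finally show ?thesis using bt_zero_iff V_def by blast
  qed
  define H where "H = br X T"
  have HP: "H \<in> P"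
  proof (rule theta_neg_P)
    have "theta H = br (theta X) (theta T)" unfolding H_def by (rule theta_br)
    also have "\<dots> = br T X" unfolding T_def theta_theta ..
    also have "\<dots> = - H" unfolding H_def by (rule anti)
    finally show "theta H = - H" .
  qed
  have Hcomm: "br H'' H = 0" if h: "H'' \<in> A" for H''
  proof -
    have "br H'' H = br (br H'' X) T + br X (br H'' T)" unfolding H_def by (rule leib)
    also have "\<dots> = br (\<mu> H'' *\<^sub>R X) T + br X ((- \<mu> H'') *\<^sub>R T)"
      using X(1) T h unfolding root_space_def by simp
    also have "\<dots> = 0" by (simp add: bl)
    finally show ?thesis .
  qed
  have HA: "H \<in> A" using ma HP Hcomm unfolding maximal_abelian_def by blast
  have "killing br H H' = killing br X (br T H')" unfolding H_def by (rule kinv)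
  also have "br T H' = - br H' T" by (rule anti)
  also have "br H' T = (- \<mu> H') *\<^sub>R T" using T H'(1) unfolding root_space_def by simp
  also have "killing br X (- ((- \<mu> H') *\<^sub>R T)) = \<mu> H' * killing br X T"
    by (simp add: kr_neg kr_scale)
  also have "killing br X T = - bt X X" unfolding bt_def T_def by simp
  finally have kH: "killing br H H' = - \<mu> H' * bt X X" by simp
  have btX: "bt X X > 0" using bt_pos X(2) by blast
  have Hne: "H \<noteq> 0"
  proof
    assume "H = 0"
    then have "killing br H H' = 0" by (simp add: kl_zero)
    then show False using kH btX H'(2) by simp
  qed
  have btH: "bt H H > 0" using bt_pos Hne by blast
  have "br H X = \<mu> H *\<^sub>R X" using X(1) HA unfolding root_space_def by simp
  then have a1: "bt (br H X) X = \<mu> H * bt X X" by (simp add: bt_scale)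
  have "br H X = - br X H" by (rule anti)
  then have "bt (br H X) X = - bt (br X H) X" by (simp add: bt_neg)
  also have "bt (br X H) X = - bt H (br (theta X) X)" by (rule bt_adj)
  also have "br (theta X) X = - H" unfolding H_def T_def[symmetric] by (rule anti)
  also have "- bt H (- H) = bt H H" by (simp add: bt_rneg)
  finally have "\<mu> H * bt X X = - bt H H" using a1 by simp
  then have muH: "\<mu> H < 0" using btX btH by (smt (verit) mult_nonneg_nonneg)
  have "br H Y0 = \<nu> H *\<^sub>R Y0" using Y0(1) HA unfolding root_space_def by simp
  then have b1: "bt (br H Y0) Y0 = \<nu> H * bt Y0 Y0" by (simp add: bt_scale)
  have xy: "br X Y0 = 0" using kill Y0(1) by blast
  have "br H Y0 = br X (br T Y0) - br T (br X Y0)" unfolding H_def by (rule jac2)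
  also have "\<dots> = br X (br T Y0)" using xy by (simp add: bl)
  finally have "bt (br H Y0) Y0 = bt (br X (br T Y0)) Y0" by simp
  also have "\<dots> = - bt (br T Y0) (br T Y0)" unfolding bt_adj T_def ..
  finally have "\<nu> H * bt Y0 Y0 \<le> 0" using b1 bt_nonneg[of "br T Y0"] by simp
  moreover have "bt Y0 Y0 > 0" using bt_pos Y0(2) by blast
  ultimately have nuH: "\<nu> H \<le> 0" by (simp add: mult_le_0_iff)
  have "br H Z = (\<mu> H + \<nu> H) *\<^sub>R Z" using Z(1) HA unfolding root_space_def by simp
  then have c1: "bt (br H Z) Z = (\<mu> H + \<nu> H) * bt Z Z" by (simp add: bt_scale)
  have tz: "br T Z = 0" using s2 Z(1) by blast
  have "br H Z = br X (br T Z) - br T (br X Z)" unfolding H_def by (rule jac2)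
  also have "\<dots> = - br T (br X Z)" using tz by (simp add: bl)
  finally have "bt (br H Z) Z = - bt (br T (br X Z)) Z" by (simp add: bt_neg)
  also have "bt (br T (br X Z)) Z = - bt (br X Z) (br (theta T) Z)" by (rule bt_adj)
  also have "br (theta T) Z = br X Z" using tT by simp
  finally have "(\<mu> H + \<nu> H) * bt Z Z \<ge> 0" using c1 bt_nonneg[of "br X Z"] by simp
  moreover have "bt Z Z > 0" using bt_pos Z(2) by blast
  ultimately have "\<mu> H + \<nu> H \<ge> 0" by (simp add: zero_le_mult_iff)
  then show False using muH nuH by simp
qed
end

theorem lemma4p2:
  fixes br :: "'g::euclidean_space \<Rightarrow> 'g \<Rightarrow> 'g"
    and K P A :: "'g set" and \<mu> \<nu> :: "'g \<Rightarrow> real"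
  assumes "noncompact_type br K P"
    and "maximal_abelian br P A"
    and "restricted_root br A \<mu>"
    and "restricted_root br A \<nu>"
    and "restricted_root br A (\<lambda>H. \<mu> H + \<nu> H)"
  shows "(\<forall>X\<in>root_space br A \<mu>. X \<noteq> 0 \<longrightarrow> (\<exists>Y\<in>root_space br A \<nu>. br X Y \<noteq> 0)) \<and>
         (\<forall>Y\<in>root_space br A \<nu>. Y \<noteq> 0 \<longrightarrow> (\<exists>X\<in>root_space br A \<mu>. br X Y \<noteq> 0))"
proof -
  have lie: "lie_algebra br" and cdec: "cartan_decomposition br K P"
    using assms(1) unfolding noncompact_type_def semisimple_def by simp_all
  interpret c: ctx br K P using lie cdec by unfold_locales
  obtain H1 where H1: "H1 \<in> A" "\<mu> H1 \<noteq> 0" using assms(3) unfolding restricted_root_def by blast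
  obtain H2 where H2: "H2 \<in> A" "\<nu> H2 \<noteq> 0" using assms(4) unfolding restricted_root_def by blast
  obtain Y0 where Y0: "Y0 \<in> root_space br A \<nu>" "Y0 \<noteq> 0" using assms(4) unfolding restricted_root_def by blast
  obtain X0 where X0: "X0 \<in> root_space br A \<mu>" "X0 \<noteq> 0" using assms(3) unfolding restricted_root_def by blast
  obtain Z where Z: "Z \<in> root_space br A (\<lambda>H. \<mu> H + \<nu> H)" "Z \<noteq> 0"
    using assms(5) unfolding restricted_root_def by blast
  have Z': "Z \<in> root_space br A (\<lambda>H. \<nu> H + \<mu> H)" using Z(1) by (simp add: add.commute)
  show ?thesis
  proof (intro conjI ballI impI)
    fix X assume X: "X \<in> root_space br A \<mu>" "X \<noteq> 0"
    show "\<exists>Y\<in>root_space br A \<nu>. br X Y \<noteq> 0"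
    proof (rule ccontr)
      assume "\<not> ?thesis"
      then have "\<forall>Y\<in>root_space br A \<nu>. br X Y = 0" by blast
      then show False using c.main[OF assms(2) H1 X _ Y0 Z] by blast
    qed
  next
    fix Y assume Y: "Y \<in> root_space br A \<nu>" "Y \<noteq> 0"
    show "\<exists>X\<in>root_space br A \<mu>. br X Y \<noteq> 0"
    proof (rule ccontr)
      assume "\<not> ?thesis"
      then have "\<forall>X\<in>root_space br A \<mu>. br Y X = 0" using c.anti[of Y] by (metis neg_0_equal_iff_equal)
      then show False using c.main[OF assms(2) H2 Y _ X0 Z' Z(2)] by blast
    qed
  qed
qed

end
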